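(* Let $B\in\mathbb{R}^{N_x\times N_x}$ be symmetric positive definite, $\bar x\in\mathbb{R}^{N_x}$, and $V(x) = \frac12(x-\bar x)^{\rm T}B^{-1}(x-\bar x)$ (i.e. $U\equiv0$). For step size $\Delta\tau>0$ consider the scheme $$p_{n+1/2} = p_n - \tfrac{\Delta\tau}{2}\nabla_xV(x_n),\quad x_{n+1} = x_n + \Delta\tau\,\widetilde M^{-1}p_{n+1/2},\quad p_{n+1} = p_{n+1/2}-\tfrac{\Delta\tau}{2}\nabla_xV(x_{n+1}),$$ with $\widetilde M = I + \frac{\Delta\tau^2}{4}B^{-1}$. Then for all $\Delta\tau>0$ and all $(x_n,p_n)$, $$\mathcal{H}(x_{n+1},p_{n+1}) = \mathcal{H}(x_n,p_n),\qquad \mathcal{H}(x,p) := \tfrac12p^{\rm T}p + V(x).$$ *)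

theory Defs
  imports "HOL-Analysis.Analysis"
begin

definition sym_pos_def_matrix :: "real^'n^'n \<Rightarrow> bool" where
  "sym_pos_def_matrix B \<longleftrightarrow> transpose B = B \<and> (\<forall>x. x \<noteq> 0 \<longrightarrow> x \<bullet> (B *v x) > 0)"

definition quadV :: "real^'n^'n \<Rightarrow> real^'n \<Rightarrow> real^'n \<Rightarrow> real" where
  "quadV B xbar x = (1/2) * ((x - xbar) \<bullet> (matrix_inv B *v (x - xbar)))"

definition hamiltonian :: "(real^'n \<Rightarrow> real) \<Rightarrow> real^'n \<Rightarrow> real^'n \<Rightarrow> real" where
  "hamiltonian V x p = (1/2) * (p \<bullet> p) + V x"

end

theory Submission
  imports Defs
begin

lemma inv_props:
  fixes A :: "real^'n^'n"
  assumes "invertible A"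
  shows "A ** matrix_inv A = mat 1" "matrix_inv A ** A = mat 1"
proof -
  have "\<exists>A'. A ** A' = mat 1 \<and> A' ** A = mat 1" using assms by (simp add: invertible_def)
  from someI_ex[OF this] show "A ** matrix_inv A = mat 1" "matrix_inv A ** A = mat 1"
    unfolding matrix_inv_def by auto
qed

lemma pd_invertible:
  fixes B :: "real^'n^'n"
  assumes "\<forall>x. x \<noteq> 0 \<longrightarrow> x \<bullet> (B *v x) > 0"
  shows "invertible B"
proof -
  have "\<forall>x. B *v x = 0 \<longrightarrow> x = 0"
    using assms by (metis inner_zero_right less_irrefl)
  then show ?thesis unfolding invertible_left_inverse matrix_left_invertible_ker .
qed

lemma sym_inner:
  fixes A :: "real^'n^'n"
  assumes "transpose A = A"
  shows "u \<bullet> (A *v v) = (A *v u) \<bullet> v"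
  by (metis assms dot_lmul_matrix transpose_matrix_vector)

lemma arith_helper:
  fixes a b c d e f g :: real
  shows "a + (d*b + d*c) = e + (d*(d*f) - d*(d*g))/4 \<Longrightarrow>
     e/2 + d*(d*f)/8 = a/2 + (d*b/2 + (d*c/2 + d*(d*g)/8))"
  by (simp add: field_simps)

theorem mainTheorem16:
  fixes B :: "real^'n^'n" and xbar xn pn :: "real^'n" and dt :: real
    and gradV :: "real^'n \<Rightarrow> real^'n"
  assumes "sym_pos_def_matrix B"
    and "\<And>x. (quadV B xbar has_derivative (\<lambda>h. gradV x \<bullet> h)) (at x)"
    and "dt > 0"
  shows "let Mt = mat 1 + (dt^2 / 4) *\<^sub>R matrix_inv B;
             phalf = pn - (dt / 2) *\<^sub>R gradV xn;
             xn1 = xn + dt *\<^sub>R (matrix_inv Mt *v phalf);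
             pn1 = phalf - (dt / 2) *\<^sub>R gradV xn1
         in hamiltonian (quadV B xbar) xn1 pn1 = hamiltonian (quadV B xbar) xn pn"
proof -
  define A where "A = matrix_inv B"
  have Bsym: "transpose B = B" and Bpd: "\<forall>x. x \<noteq> 0 \<longrightarrow> x \<bullet> (B *v x) > 0"
    using assms(1) unfolding sym_pos_def_matrix_def by auto
  have Binv: "invertible B" using pd_invertible[OF Bpd] .
  have BA: "B ** A = mat 1" and AB: "A ** B = mat 1" using inv_props[OF Binv] A_def by auto
  have Asym: "transpose A = A"
  proof -
    have "transpose A ** B = mat 1"
      by (metis Bsym BA matrix_transpose_mul transpose_mat)
    then have "transpose A ** (B ** A) = A"
      by (metis matrix_mul_assoc matrix_mul_lid)
    then show ?thesis using BA by (simp add: matrix_mul_rid)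
  qed
  have Apsd: "x \<bullet> (A *v x) \<ge> 0" for x
  proof -
    have "x = B *v (A *v x)" by (simp add: matrix_vector_mul_assoc BA)
    then have "x \<bullet> (A *v x) = (A *v x) \<bullet> (B *v (A *v x))"
      by (metis inner_commute)
    also have "\<dots> \<ge> 0" using Bpd by (cases "A *v x = 0") (auto intro: less_imp_le)
    finally show ?thesis .
  qed
  have grad: "gradV x = A *v (x - xbar)" for x
  proof -
    have lin: "((\<lambda>x. A *v (x - xbar)) has_derivative (*v) A) (at x)"
    proof -
      have "((\<lambda>x. A *v x - A *v xbar) has_derivative (\<lambda>h. A *v h - 0)) (at x)"
        by (intro has_derivative_diff bounded_linear_imp_has_derivative has_derivative_const
            matrix_vector_mul_bounded_linear)
      then show ?thesis by (simp add: matrix_vector_mult_diff_distrib)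
    qed
    have d: "(quadV B xbar has_derivative (\<lambda>h. (A *v (x - xbar)) \<bullet> h)) (at x)"
    proof -
      have "(quadV B xbar has_derivative
          (\<lambda>h. (1/2) * (h \<bullet> (A *v (x - xbar)) + (x - xbar) \<bullet> (A *v h)))) (at x)"
        unfolding quadV_def A_def[symmetric]
        by (auto intro!: derivative_eq_intros lin)
      moreover have "(\<lambda>h. (1/2) * (h \<bullet> (A *v (x - xbar)) + (x - xbar) \<bullet> (A *v h)))
          = (\<lambda>h. (A *v (x - xbar)) \<bullet> h)"
        by (rule ext) (simp add: sym_inner[OF Asym] inner_commute)
      ultimately show ?thesis by simp
    qed
    have "(\<lambda>h. gradV x \<bullet> h) = (\<lambda>h. (A *v (x - xbar)) \<bullet> h)"
      by (rule has_derivative_unique[OF assms(2) d])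
    then have "(gradV x - A *v (x - xbar)) \<bullet> (gradV x - A *v (x - xbar)) = 0"
      by (metis inner_diff_left right_minus_eq)
    then show ?thesis by simp
  qed
  define c where "c = dt^2/4"
  define Mt where "Mt = mat 1 + c *\<^sub>R A"
  have Mtv: "Mt *v v = v + c *\<^sub>R (A *v v)" for v
    unfolding Mt_def by (simp add: matrix_vector_mult_add_rdistrib scaleR_matrix_vector_assoc)
  have c0: "c \<ge> 0" unfolding c_def by simp
  have "\<forall>v. Mt *v v = 0 \<longrightarrow> v = 0"
  proof (intro allI impI)
    fix v assume "Mt *v v = 0"
    then have "v \<bullet> (Mt *v v) = 0" by simp
    then have "v \<bullet> v + c * (v \<bullet> (A *v v)) = 0" by (simp add: Mtv inner_add_right)
    moreover have "c * (v \<bullet> (A *v v)) \<ge> 0" using c0 Apsd by simp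
    ultimately have "v \<bullet> v = 0" by (smt (verit) inner_ge_zero)
    then show "v = 0" by simp
  qed
  then have Mtinv: "invertible Mt" unfolding invertible_left_inverse matrix_left_invertible_ker .
  have MtMi: "Mt *v (matrix_inv Mt *v q) = q" for q
    by (simp add: matrix_vector_mul_assoc inv_props(1)[OF Mtinv])
  define y where "y = xn - xbar"
  define q where "q = pn - (dt / 2) *\<^sub>R (A *v y)"
  define y1 where "y1 = y + dt *\<^sub>R (matrix_inv Mt *v q)"
  have xn1: "xn + dt *\<^sub>R (matrix_inv Mt *v q) - xbar = y1" unfolding y1_def y_def by simp
  define g0 where "g0 = A *v y"
  define g1 where "g1 = A *v y1"
  have key: "dt *\<^sub>R q = (y1 - y) + c *\<^sub>R (g1 - g0)"
  proof -
    have "Mt *v (y1 - y) = dt *\<^sub>R q"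
      unfolding y1_def by (simp add: matrix_vector_mult_scaleR MtMi)
    then have e: "y1 + c *\<^sub>R (A *v y1) - (y + c *\<^sub>R (A *v y)) = dt *\<^sub>R q"
      by (simp add: Mtv matrix_vector_mult_diff_distrib)
    have "y1 - y + c *\<^sub>R (A *v y1 - A *v y) = y1 + c *\<^sub>R (A *v y1) - (y + c *\<^sub>R (A *v y))"
      by (simp add: scaleR_diff_right)
    then show ?thesis unfolding g1_def g0_def using e by simp
  qed
  have symm: "y \<bullet> g1 = y1 \<bullet> g0" unfolding g0_def g1_def
    by (metis sym_inner[OF Asym] inner_commute)
  have cm: "g0 \<bullet> g1 = g1 \<bullet> g0" "g1 \<bullet> q = q \<bullet> g1" "g0 \<bullet> q = q \<bullet> g0"
    by (simp_all add: inner_commute)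
  have k2: "dt * (q \<bullet> g1) + dt * (q \<bullet> g0) = (y1 - y + c *\<^sub>R (g1 - g0)) \<bullet> (g1 + g0)"
    by (simp add: key[symmetric] inner_add_right)
  have k3: "dt * (q \<bullet> g1) + dt * (q \<bullet> g0) = y1 \<bullet> g1 - y \<bullet> g0 + c * (g1 \<bullet> g1 - g0 \<bullet> g0)"
    using k2 symm cm by (simp add: inner_add_right inner_add_left inner_diff_left inner_diff_right
        algebra_simps)
  have "hamiltonian (quadV B xbar) (y1 + xbar) (q - (dt/2) *\<^sub>R g1)
      = hamiltonian (quadV B xbar) (y + xbar) (q + (dt/2) *\<^sub>R g0)"
    unfolding hamiltonian_def quadV_def A_def[symmetric] g1_def[symmetric] g0_def[symmetric]
    using k3 cm unfolding c_def
    apply (simp add: inner_add_right inner_add_left inner_diff_left inner_diff_right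
        algebra_simps power2_eq_square g1_def[symmetric] g0_def[symmetric])
    by (erule arith_helper)
  moreover have e1: "xn + dt *\<^sub>R (matrix_inv Mt *v q) = y1 + xbar"
    unfolding y1_def y_def by simp
  moreover have "pn = q + (dt/2) *\<^sub>R g0" unfolding q_def g0_def by simp
  ultimately show ?thesis
    unfolding Let_def grad Mt_def[unfolded c_def, symmetric] A_def[symmetric] y_def[symmetric]
      g0_def[symmetric] q_def[symmetric] xn1 g1_def[symmetric]
    by (simp add: y_def e1 g1_def[symmetric])
qed

end
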